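(* Let $\gamma,h>0$, $z,\tilde z\in\mathbb{R}^{2d}$, $n\ge1$, write $\Delta z=\tilde z-z=(\Delta x,\Delta v)$, and let $y_k=(u_k,w_k)$, $k\in\{0,\dots,n\}$, be the optimized trajectory. Then for all $k\in\{0,\dots,n\}$, \[ |u_k|\le|\Delta x|+\frac{he^{-\gamma h/2}}{1-e^{-\gamma h}}(1-e^{-\gamma hn})|\Delta v|\le 2\left(1+\frac{hn}{2+\gamma hn}\right)|\Delta z|. \]
   Context: Let $A_h=\begin{pmatrix} I_d & he^{-\gamma h/2}I_d\\ 0 & e^{-\gamma h}I_d\end{pmatrix}$, $L_h=(1-e^{-\gamma h})^{1/2}\begin{pmatrix} hI_d & 0\\ e^{-\gamma h/2}I_d & I_d\end{pmatrix}$, $\Sigma_{h,n}=\sum_{k=1}^n A_h^{n-k}L_hL_h^T(A_h^T)^{n-k}$, $\Delta z=\tilde z-z$, and $E_k=L_h^T(A_h^T)^{n-k}\Sigma_{h,n}^{-1}A_h^n\Delta z$ for $k=1,\dots,n$. The optimized trajectory is $y_0=\Delta z$, $y_{k+1}=A_hy_k-L_hE_{k+1}$ for $k=0,\dots,n-1$, with $y_k=(u_k,w_k)\in\mathbb{R}^d\times\mathbb{R}^d$ (position and velocity components). *)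

theory Defs
  imports "HOL-Analysis.Analysis"
begin

text \<open>Vectors of R^{2d} are indexed by the sum type 'd + 'd: indices Inl i are the
 position coordinates, Inr i the velocity coordinates (i ranges over the d-element type 'd).\<close>

type_synonym 'd phase = "real ^ ('d + 'd)"
type_synonym 'd phmat = "real ^ ('d + 'd) ^ ('d + 'd)"

definition blockmat :: "real \<Rightarrow> real \<Rightarrow> real \<Rightarrow> real \<Rightarrow> ('d::finite) phmat" where
  "blockmat a b c e = (\<chi> i j. (case (i, j) of
      (Inl p, Inl q) \<Rightarrow> (if p = q then a else 0)
    | (Inl p, Inr q) \<Rightarrow> (if p = q then b else 0)
    | (Inr p, Inl q) \<Rightarrow> (if p = q then c else 0)
    | (Inr p, Inr q) \<Rightarrow> (if p = q then e else 0)))"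

primrec matpow :: "('a::semiring_1) ^ 'n ^ 'n \<Rightarrow> nat \<Rightarrow> 'a ^ 'n ^ 'n" where
  "matpow M 0 = mat 1"
| "matpow M (Suc k) = M ** matpow M k"

definition Ah :: "real \<Rightarrow> real \<Rightarrow> ('d::finite) phmat" where
  "Ah \<gamma> h = blockmat 1 (h * exp (-\<gamma>*h/2)) 0 (exp (-\<gamma>*h))"

definition Lh :: "real \<Rightarrow> real \<Rightarrow> ('d::finite) phmat" where
  "Lh \<gamma> h = sqrt (1 - exp (-\<gamma>*h)) *\<^sub>R blockmat h 0 (exp (-\<gamma>*h/2)) 1"

definition Sigma_hn :: "real \<Rightarrow> real \<Rightarrow> nat \<Rightarrow> ('d::finite) phmat" where
  "Sigma_hn \<gamma> h n = (\<Sum>k=1..n. matpow (Ah \<gamma> h) (n-k) ** Lh \<gamma> h ** transpose (Lh \<gamma> h)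
                                   ** matpow (transpose (Ah \<gamma> h)) (n-k))"

definition Ek :: "real \<Rightarrow> real \<Rightarrow> nat \<Rightarrow> ('d::finite) phase \<Rightarrow> nat \<Rightarrow> 'd phase" where
  "Ek \<gamma> h n dz k = (transpose (Lh \<gamma> h) ** matpow (transpose (Ah \<gamma> h)) (n-k)
                      ** matrix_inv (Sigma_hn \<gamma> h n) ** matpow (Ah \<gamma> h) n) *v dz"

primrec traj :: "real \<Rightarrow> real \<Rightarrow> nat \<Rightarrow> ('d::finite) phase \<Rightarrow> nat \<Rightarrow> 'd phase" where
  "traj \<gamma> h n dz 0 = dz"
| "traj \<gamma> h n dz (Suc k) = Ah \<gamma> h *v traj \<gamma> h n dz k - Lh \<gamma> h *v Ek \<gamma> h n dz (Suc k)"

definition pos :: "('d::finite) phase \<Rightarrow> real ^ 'd" where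
  "pos y = (\<chi> i. y $ Inl i)"

definition vel :: "('d::finite) phase \<Rightarrow> real ^ 'd" where
  "vel y = (\<chi> i. y $ Inr i)"

end

theory Submission
  imports Defs
begin


lemma sum_UNIV_sum: "(\<Sum>k\<in>(UNIV::('a::finite + 'b::finite) set). f k) = (\<Sum>i\<in>UNIV. f (Inl i)) + (\<Sum>i\<in>UNIV. f (Inr i))"
  by (simp add: UNIV_Plus_UNIV[symmetric] sum.Plus del: UNIV_Plus_UNIV) 

lemma bm_entry: 
  "blockmat a b c e $ Inl p $ Inl q = (if p = q then a else 0)"
  "blockmat a b c e $ Inl p $ Inr q = (if p = q then b else 0)"
  "blockmat a b c e $ Inr p $ Inl q = (if p = q then c else 0)"
  "blockmat a b c e $ Inr p $ Inr q = (if p = q then e else 0)"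
  by (simp_all add: blockmat_def)

lemma sum_if2: "(\<Sum>q\<in>UNIV. (if (p::'a::finite) = q then (x::real) else 0) * (if q = r then y else 0)) = (if p = r then x*y else 0)"
proof -
  have "(\<Sum>q\<in>UNIV. (if p = q then (x::real) else 0) * (if q = r then y else 0)) = 
     (\<Sum>q\<in>UNIV. if q = p then (if p = r then x*y else 0) else 0)"
    by (rule sum.cong) auto
  also have "\<dots> = (if p = r then x*y else 0)" by (subst sum.delta) simp_all
  finally show ?thesis .
qed

lemma bm_mult: "(blockmat a b c e :: ('d::finite) phmat) ** blockmat a' b' c' e' =
   blockmat (a*a'+b*c') (a*b'+b*e') (c*a'+e*c') (c*b'+e*e')"
  unfolding vec_eq_iff matrix_matrix_mult_def
  apply (intro allI)
  subgoal for i j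
    apply (cases i; cases j) 
    apply (simp_all only: vec_lambda_beta sum_UNIV_sum bm_entry sum.case sum_if2 sum.simps)
    apply auto
    done
  done

lemma bm_eqI: "a = a' \<Longrightarrow> b = b' \<Longrightarrow> c = c' \<Longrightarrow> e = e' \<Longrightarrow> blockmat a b c e = blockmat a' b' c' e'"
  by simp

lemma bm_transpose: "transpose (blockmat a b c e :: ('d::finite) phmat) = blockmat a c b e"
  unfolding vec_eq_iff transpose_def
  apply (intro allI)
  subgoal for i j by (cases i; cases j) (auto simp: bm_entry)
  done

lemma bm_one: "(mat 1 :: ('d::finite) phmat) = blockmat 1 0 0 1"
  unfolding vec_eq_iff mat_def
  apply (intro allI)
  subgoal for i j by (cases i; cases j) (auto simp: bm_entry)
  done

lemma bm_zero: "blockmat 0 0 0 0 = (0 :: ('d::finite) phmat)"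
  unfolding vec_eq_iff 
  apply (intro allI)
  subgoal for i j by (cases i; cases j) (auto simp: bm_entry)
  done

lemma bm_diff: "blockmat a b c e - blockmat a' b' c' e' = (blockmat (a-a') (b-b') (c-c') (e-e') :: ('d::finite) phmat)"
  unfolding vec_eq_iff 
  apply (intro allI)
  subgoal for i j by (cases i; cases j) (auto simp: bm_entry)
  done

lemma bm_scale: "x *\<^sub>R blockmat a b c e = (blockmat (x*a) (x*b) (x*c) (x*e) :: ('d::finite) phmat)"
  unfolding vec_eq_iff 
  apply (intro allI)
  subgoal for i j by (cases i; cases j) (auto simp: bm_entry)
  done

lemma bm_pos: "pos ((blockmat a b c e :: ('d::finite) phmat) *v x) = a *\<^sub>R pos x + b *\<^sub>R vel x"
  unfolding vec_eq_iff pos_def vel_def matrix_vector_mult_def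
  by (auto simp: sum_UNIV_sum bm_entry if_distrib[of "\<lambda>u. u * _"] cong: if_cong)

lemma geo_shift: "(\<Sum>j<Suc m. (d::real)^j) = 1 + d * (\<Sum>j<m. d^j)"
  by (simp add: sum.lessThan_Suc_shift sum_distrib_left del: sum.lessThan_Suc)

lemma bm_pow_lower: "matpow (blockmat 1 0 b d :: ('d::finite) phmat) m = blockmat 1 0 (b * (\<Sum>j<m. d^j)) (d^m)"
  by (induct m) (simp_all add: bm_one bm_mult geo_shift algebra_simps del: sum.lessThan_Suc)

lemma mm_diff_left: "(A::real^'n^'m) ** (B - C) = A ** B - A ** (C::real^'p^'n)"
  unfolding vec_eq_iff matrix_matrix_mult_def by (simp add: algebra_simps sum_subtractf)

lemma mm_diff_right: "((B::real^'n^'m) - C) ** (A::real^'p^'n) = B ** A - C ** A"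
  unfolding vec_eq_iff matrix_matrix_mult_def by (simp add: algebra_simps sum_subtractf)

lemma mm_sum_left: "finite S \<Longrightarrow> (A::real^'n^'m) ** sum f S = sum (\<lambda>x. A ** (f x :: real^'p^'n)) S"
  by (induct S rule: finite_induct) (auto simp: matrix_add_ldistrib)

lemma mm_add_right: "((B::real^'n^'m) + C) ** (A::real^'p^'n) = B ** A + C ** A"
  unfolding vec_eq_iff matrix_matrix_mult_def by (simp add: algebra_simps sum.distrib)

lemma mm_sum_right: "finite S \<Longrightarrow> sum f S ** (A::real^'p^'n) = sum (\<lambda>x. (f x :: real^'n^'m) ** A) S"
  by (induct S rule: finite_induct) (auto simp: mm_add_right)



lemma sinh_bound: assumes "(x::real) \<ge> 0" shows "2*x \<le> exp x - exp (-x)"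
proof -
  let ?f = "\<lambda>x::real. exp x - exp (-x) - 2*x"
  have "?f 0 \<le> ?f x"
  proof (rule DERIV_nonneg_imp_nondecreasing[OF assms])
    fix y :: real assume "0 \<le> y" "y \<le> x"
    have "exp y + exp (-y) - 2 \<ge> 0" using exp_ge_add_one_self[of y] exp_ge_add_one_self[of "-y"] by linarith
    moreover have "DERIV ?f y :> exp y + exp (-y) - 2"
      by (auto intro!: derivative_eq_intros)
    ultimately show "\<exists>d. DERIV ?f y :> d \<and> d \<ge> 0" by blast
  qed
  then show ?thesis by simp
qed

lemma pade_bound: assumes "(x::real) \<ge> 0" shows "(1-x)*exp x \<le> (1+x)*exp (-x)"
proof -
  let ?f = "\<lambda>x::real. (1+x)*exp (-x) - (1-x)*exp x"
  have "?f 0 \<le> ?f x"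
  proof (rule DERIV_nonneg_imp_nondecreasing[OF assms])
    fix y :: real assume y: "0 \<le> y" "y \<le> x"
    have "exp (-y) \<le> exp y" using y by simp
    then have "y * (exp y - exp (-y)) \<ge> 0" using y by simp
    moreover have "DERIV ?f y :> y * (exp y - exp (-y))"
      by (auto intro!: derivative_eq_intros simp: algebra_simps)
    ultimately show "\<exists>d. DERIV ?f y :> d \<and> d \<ge> 0" by blast
  qed
  then show ?thesis by simp
qed

lemma c_bound1: assumes "(a::real) \<ge> 0" shows "a * exp (-a/2) \<le> 1 - exp (-a)"
proof -
  have "a \<le> exp (a/2) - exp (-(a/2))" using sinh_bound[of "a/2"] assms by simp
  then have "a * exp (-a/2) \<le> (exp (a/2) - exp (-(a/2))) * exp (-a/2)"
    by (intro mult_right_mono) auto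
  also have "\<dots> = 1 - exp (-a)"
    by (simp add: algebra_simps flip: exp_add)
  finally show ?thesis .
qed

lemma c_bound2: assumes "(T::real) \<ge> 0" shows "(1 - exp (-T)) * (2 + T) \<le> 2*T"
proof -
  have "(1-T/2)*exp (T/2) \<le> (1+T/2)*exp (-(T/2))" using pade_bound[of "T/2"] assms by simp
  then have "(1-T/2)*exp (T/2) * exp (-(T/2)) \<le> (1+T/2)*exp (-(T/2)) * exp (-(T/2))"
    by (intro mult_right_mono) auto
  then have "(1-T/2) \<le> (1+T/2)*exp (-T)"
    by (simp add: algebra_simps flip: exp_add)
  then show ?thesis by (simp add: algebra_simps)
qed



lemma norm_pos_le: "norm (pos (x::('d::finite) phase)) \<le> norm x"
proof -
  have "norm (pos x)^2 = (\<Sum>i\<in>UNIV. x $ Inl i * x $ Inl i)"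
    by (simp add: power2_norm_eq_inner inner_vec_def pos_def)
  also have "\<dots> \<le> (\<Sum>i\<in>UNIV. x $ Inl i * x $ Inl i) + (\<Sum>i\<in>UNIV. x $ Inr i * x $ Inr i)"
    by (simp add: sum_nonneg)
  also have "\<dots> = norm x^2" by (simp add: power2_norm_eq_inner inner_vec_def sum_UNIV_sum)
  finally show ?thesis by (rule power2_le_imp_le) simp
qed

lemma norm_vel_le: "norm (vel (x::('d::finite) phase)) \<le> norm x"
proof -
  have "norm (vel x)^2 = (\<Sum>i\<in>UNIV. x $ Inr i * x $ Inr i)"
    by (simp add: power2_norm_eq_inner inner_vec_def vel_def)
  also have "\<dots> \<le> (\<Sum>i\<in>UNIV. x $ Inl i * x $ Inl i) + (\<Sum>i\<in>UNIV. x $ Inr i * x $ Inr i)"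
    by (simp add: sum_nonneg)
  also have "\<dots> = norm x^2" by (simp add: power2_norm_eq_inner inner_vec_def sum_UNIV_sum)
  finally show ?thesis by (rule power2_le_imp_le) simp
qed

primrec Zseq :: "('d::finite) phmat \<Rightarrow> 'd phmat \<Rightarrow> 'd phmat \<Rightarrow> nat \<Rightarrow> nat \<Rightarrow> 'd phmat" where
  "Zseq A L M n 0 = mat 1"
| "Zseq A L M n (Suc k) = A ** Zseq A L M n k - L ** (transpose L ** matpow (transpose A) (n - Suc k) ** M)"

lemma Zseq_gen: "Zseq A L M n k = matpow A k -
   (\<Sum>j=1..k. matpow A (k-j) ** L ** transpose L ** matpow (transpose A) (n-j)) ** M"
proof (induct k)
  case 0
  then show ?case by simp
next
  case (Suc k)
  have s1: "A ** (\<Sum>j=1..k. matpow A (k-j) ** L ** transpose L ** matpow (transpose A) (n-j))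
      = (\<Sum>j=1..k. matpow A (Suc k-j) ** L ** transpose L ** matpow (transpose A) (n-j))"
    by (simp add: mm_sum_left matrix_mul_assoc Suc_diff_le)
  have s2: "(\<Sum>j=1..Suc k. matpow A (Suc k-j) ** L ** transpose L ** matpow (transpose A) (n-j))
     = (\<Sum>j=1..k. matpow A (Suc k-j) ** L ** transpose L ** matpow (transpose A) (n-j)) + L ** transpose L ** matpow (transpose A) (n - Suc k)"
    by (simp add: sum.cl_ivl_Suc)
  show ?case
    unfolding Zseq.simps Suc s2 mm_diff_left mm_add_right matrix_mul_assoc s1[symmetric]
    by (simp add: algebra_simps matrix_mul_assoc)
qed

lemma traj_Zseq:
  assumes "matrix_inv (Sigma_hn \<gamma> h n) ** matpow (Ah \<gamma> h) n = M"
  shows "traj \<gamma> h n dz k = Zseq (Ah \<gamma> h) (Lh \<gamma> h) M n k *v dz"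
proof (induct k)
  case 0
  then show ?case by simp
next
  case (Suc k)
  have "Ek \<gamma> h n dz (Suc k) = (transpose (Lh \<gamma> h) ** matpow (transpose (Ah \<gamma> h)) (n - Suc k) ** M) *v dz"
    unfolding Ek_def assms[symmetric] by (simp add: matrix_mul_assoc)
  then show ?case using Suc
    by (simp add: matrix_vector_mul_assoc matrix_vector_mult_diff_rdistrib)
qed

locale tsetup =
  fixes \<gamma> h :: real and n :: nat
  assumes gpos: "\<gamma> > 0" and hpos: "h > 0" and npos: "n \<ge> 1"
begin

definition "t = exp (-\<gamma>*h/2)"
definition "r = t^2"
definition "s = sqrt (1 - r)"

lemma t_pos: "0 < t" and t_lt1: "t < 1"
  using gpos hpos by (auto simp: t_def)

lemma r_pos: "0 < r" and r_lt1: "r < 1"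
  using t_pos t_lt1 by (simp_all add: r_def abs_square_less_1)

lemma s_sq: "s * s = 1 - r"
  using r_lt1 by (simp add: s_def)

lemma exp_gh: "exp (-\<gamma>*h) = r"
proof -
  have "exp (-\<gamma>*h) = exp (-\<gamma>*h/2 + -\<gamma>*h/2)" by simp
  also have "\<dots> = t^2" by (simp only: exp_add t_def power2_eq_square)
  finally show ?thesis by (simp add: r_def)
qed

lemma exp_ghn: "exp (-\<gamma>*h*n) = r^n"
proof -
  have "exp (-\<gamma>*h*n) = exp (real n * (-\<gamma>*h))" by (simp add: algebra_simps)
  also have "\<dots> = r^n" by (simp only: exp_of_nat_mult exp_gh)
  finally show ?thesis .
qed

lemma exp_gh': "exp (- (\<gamma>*h)) = r" using exp_gh by simp
lemma t_def': "exp (- (\<gamma>*h/2)) = t" by (simp add: t_def)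

lemma A_bm: "Ah \<gamma> h = blockmat 1 (h*t) 0 r"
  by (simp add: Ah_def t_def' exp_gh')

lemma L_bm: "Lh \<gamma> h = blockmat (s*h) 0 (s*t) s"
  by (simp add: Lh_def t_def' exp_gh' s_def bm_scale)

lemma AT_pow: "matpow (transpose (Ah \<gamma> h)) m = blockmat 1 0 (h*t*(\<Sum>j<m. r^j)) (r^m)"
  by (simp add: A_bm bm_transpose bm_pow_lower)

definition wf :: "real \<Rightarrow> real \<Rightarrow> real \<Rightarrow> nat \<Rightarrow> real" where "wf H K P k = H*r^k + K*r^(n-k) + 2*t*P"
definition mf :: "real \<Rightarrow> real \<Rightarrow> real \<Rightarrow> nat \<Rightarrow> real" where "mf H K P i = t*(H*r^i + K*r^(n - Suc i)) + (1+r)*P"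
definition uf :: "real \<Rightarrow> real \<Rightarrow> real \<Rightarrow> real \<Rightarrow> nat \<Rightarrow> real" where "uf d H K P k = d + h*(\<Sum>i<k. mf H K P i)"
definition "l1 P = -P*(1-r)/h"
definition "l2 K P = -K - t*P"


lemma LLT: "Lh \<gamma> h ** transpose (Lh \<gamma> h) = blockmat ((1-r)*h*h) ((1-r)*h*t) ((1-r)*h*t) ((1-r)*(t*t+1))"
  by (simp add: L_bm bm_transpose bm_mult s_sq[symmetric] algebra_simps)

lemma alg1: "(1-r)*S = 1-\<rho> \<Longrightarrow> rnk = r*\<rho> \<Longrightarrow> t*t = (r::real) \<Longrightarrow> h*L = -P*(1-r) \<Longrightarrow> 
  U + h * (t * (H * rk + K * \<rho>) + (1 + r) * P) =
     U + h * t * (H * rk + K * rnk + 2 * t * P) -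
     (((1 - r) * h * h + (1 - r) * h * t * (h * t * S)) * L + (1 - r) * h * t * \<rho> * (- K - t * P))"
  by algebra

lemma alg2: "(1-r)*S = 1-\<rho> \<Longrightarrow> rnk = r*\<rho> \<Longrightarrow> t*t = (r::real) \<Longrightarrow> rk1 = r*rk \<Longrightarrow> h*L = -P*(1-r) \<Longrightarrow> 
  H*rk1 + K*\<rho> + 2*t*P = r*(H*rk + K*rnk + 2*t*P) - (((1-r)*h*t + (1-r)*(t*t+1)*(h*t*S))*L + (1-r)*(t*t+1)*\<rho>*(-K - t*P))"
  by algebra

lemma uf_Suc: "uf d H K P (Suc k) = uf d H K P k + h * mf H K P k"
  by (simp add: uf_def algebra_simps)

lemma col_step:
  assumes "Suc k \<le> n"
  shows "uf d H K P (Suc k) = uf d H K P k + h*t*wf H K P k - (((1-r)*h*h + (1-r)*h*t*(h*t*(\<Sum>j<n - Suc k. r^j))) * l1 P + (1-r)*h*t*r^(n - Suc k) * l2 K P)"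
    and "wf H K P (Suc k) = r*wf H K P k - (((1-r)*h*t + (1-r)*(t*t+1)*(h*t*(\<Sum>j<n - Suc k. r^j))) * l1 P + (1-r)*(t*t+1)*r^(n - Suc k) * l2 K P)"
proof -
  define m where "m = n - Suc k"
  have e1: "(1-r)*(\<Sum>j<m. r^j) = 1 - r^m" using r_lt1 by (simp add: sum_gp_strict)
  have e2: "r^(n-k) = r*r^m" using assms by (simp add: m_def Suc_diff_Suc[symmetric])
  have e3: "t*t = r" by (simp add: r_def power2_eq_square)
  have e4: "r^(Suc k) = r*r^k" by simp
  have hl: "h * l1 P = -P*(1-r)" using hpos by (simp add: l1_def)
  show "uf d H K P (Suc k) = uf d H K P k + h*t*wf H K P k - (((1-r)*h*h + (1-r)*h*t*(h*t*(\<Sum>j<n - Suc k. r^j))) * l1 P + (1-r)*h*t*r^(n - Suc k) * l2 K P)"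
    unfolding uf_Suc mf_def wf_def l2_def
    by (rule alg1[OF e1[unfolded m_def] e2[unfolded m_def] e3 hl])
  show "wf H K P (Suc k) = r*wf H K P k - (((1-r)*h*t + (1-r)*(t*t+1)*(h*t*(\<Sum>j<n - Suc k. r^j))) * l1 P + (1-r)*(t*t+1)*r^(n - Suc k) * l2 K P)"
    unfolding wf_def l2_def
    by (rule alg2[OF e1[unfolded m_def] e2[unfolded m_def] e3 e4 hl])
qed

lemma Zc_step: "Suc k \<le> n \<Longrightarrow> Ah \<gamma> h ** blockmat (uf d1 H1 K1 P1 k) (uf d2 H2 K2 P2 k) (wf H1 K1 P1 k) (wf H2 K2 P2 k)
   - Lh \<gamma> h ** (transpose (Lh \<gamma> h) ** matpow (transpose (Ah \<gamma> h)) (n - Suc k) ** blockmat (l1 P1) (l1 P2) (l2 K1 P1) (l2 K2 P2))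
   = blockmat (uf d1 H1 K1 P1 (Suc k)) (uf d2 H2 K2 P2 (Suc k)) (wf H1 K1 P1 (Suc k)) (wf H2 K2 P2 (Suc k))"
  apply (simp only: matrix_mul_assoc LLT AT_pow)
  apply (simp only: A_bm bm_mult bm_diff)
  apply (rule bm_eqI)
  apply (simp_all only: col_step)
  apply (simp_all add: algebra_simps)
  done

definition "rho i = (1+r)*(1+r^n) - 2*(r*r^i + r*r^(n - Suc i))"
definition "RR = (\<Sum>i<n. rho i)"
definition "G = 1/(h*RR)"
definition "Hc1 = 2*t*G"
definition "Pc1 = -G*(1+r^n)"
definition "H0 = 1/(1 - r^n*r^n)"
definition "K0 = - (r^n) / (1 - r^n*r^n)"
definition "m0 i = mf H0 K0 0 i"
definition "kap = (\<Sum>i<n. m0 i)/RR"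
definition "Hc2 = H0 + 2*t*kap"
definition "Kc2 = K0 + 2*t*kap"
definition "Pc2 = -kap*(1+r^n)"

lemma rho_pos: assumes "i < n" shows "rho i > 0"
proof -
  define a where "a = r^i"
  define b where "b = r^(n - Suc i)"
  have rn: "r^n = r*a*b" using assms unfolding a_def b_def
    by (metis Suc_leI le_add_diff_inverse mult.assoc power_Suc power_add)
  have a1: "a \<le> 1" "b \<le> 1" "0 \<le> a" "0 \<le> b" using r_pos r_lt1 by (auto simp: a_def b_def power_le_one)
  have "rho i = (1 - r*a)*(1 - r*b) + (r - r*a)*(1-b)"
    unfolding rho_def rn a_def[symmetric] b_def[symmetric] by (simp add: algebra_simps)
  moreover have "(1 - r*a)*(1 - r*b) > 0" using a1 r_pos r_lt1
    by (intro mult_pos_pos) (auto simp: mult_le_one intro: mult_le_one le_less_trans[of _ r])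
  moreover have "(r - r*a)*(1-b) \<ge> 0" using a1 r_pos by (intro mult_nonneg_nonneg) (auto simp: mult_left_le)
  ultimately show ?thesis by linarith
qed

lemma RR_pos: "RR > 0"
  unfolding RR_def using npos by (intro sum_pos) (auto intro: rho_pos simp: lessThan_empty_iff)

lemma mf1: "mf Hc1 Hc1 Pc1 i = -G * rho i"
  unfolding mf_def Hc1_def Pc1_def rho_def by (simp add: algebra_simps r_def power2_eq_square)

lemma mf2: "mf Hc2 Kc2 Pc2 i = m0 i - kap * rho i"
  unfolding mf_def Hc2_def Kc2_def Pc2_def rho_def m0_def by (simp add: algebra_simps r_def power2_eq_square)

lemma q_lt1: "r^n * r^n < 1" and q_lt: "r^n < 1" and q_pos: "0 < r^n"
proof -
  show q1: "r^n < 1" using r_pos r_lt1 npos by (simp add: power_less_one_iff)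
  show q0: "0 < r^n" using r_pos by simp
  have "r^n * r^n \<le> r^n" using q1 q0 by (simp add: mult_left_le)
  then show "r^n * r^n < 1" using q1 by linarith
qed

lemma H0K0: "H0 + K0 * r^n = 1" and H0K0': "H0 * r^n + K0 = 0"
  using q_lt1 unfolding H0_def K0_def by (simp_all add: field_simps)

lemma Zc_0: "uf 1 Hc1 Hc1 Pc1 0 = 1" "uf 0 Hc2 Kc2 Pc2 0 = 0" "wf Hc1 Hc1 Pc1 0 = 0" "wf Hc2 Kc2 Pc2 0 = 1"
proof -
  have "wf Hc2 Kc2 Pc2 0 = H0 + K0 * r^n" unfolding wf_def Hc2_def Kc2_def Pc2_def by (simp add: algebra_simps)
  then show "uf 1 Hc1 Hc1 Pc1 0 = 1" "uf 0 Hc2 Kc2 Pc2 0 = 0" "wf Hc1 Hc1 Pc1 0 = 0" "wf Hc2 Kc2 Pc2 0 = 1" using H0K0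
    by (simp_all add: uf_def wf_def Hc1_def Pc1_def algebra_simps)
qed

lemma Zc_n: "uf 1 Hc1 Hc1 Pc1 n = 0" "uf 0 Hc2 Kc2 Pc2 n = 0" "wf Hc1 Hc1 Pc1 n = 0" "wf Hc2 Kc2 Pc2 n = 0"
proof -
  have "(\<Sum>i<n. -G * rho i) = -G * RR" unfolding RR_def by (simp add: sum_distrib_left)
  then have a: "uf 1 Hc1 Hc1 Pc1 n = 0" unfolding uf_def mf1
    using RR_pos hpos by (simp add: G_def)
  have "(\<Sum>i<n. kap * rho i) = kap * RR" unfolding RR_def by (simp add: sum_distrib_left)
  also have "\<dots> = (\<Sum>i<n. m0 i)" using RR_pos by (simp add: kap_def)
  finally have b: "uf 0 Hc2 Kc2 Pc2 n = 0" unfolding uf_def mf2 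
    by (simp add: sum_subtractf)
  have c: "wf Hc1 Hc1 Pc1 n = 0" unfolding wf_def Hc1_def Pc1_def by (simp add: algebra_simps)
  have d: "wf Hc2 Kc2 Pc2 n = 0" using H0K0' unfolding wf_def Hc2_def Kc2_def Pc2_def by (simp add: algebra_simps)
  show "uf 1 Hc1 Hc1 Pc1 n = 0" "uf 0 Hc2 Kc2 Pc2 n = 0" "wf Hc1 Hc1 Pc1 n = 0" "wf Hc2 Kc2 Pc2 n = 0" using a b c d by auto
qed

lemma Zseq_explicit: "k \<le> n \<Longrightarrow> Zseq (Ah \<gamma> h) (Lh \<gamma> h) (blockmat (l1 Pc1) (l1 Pc2) (l2 Hc1 Pc1) (l2 Kc2 Pc2) :: ('d::finite) phmat) n k = blockmat (uf 1 Hc1 Hc1 Pc1 k) (uf 0 Hc2 Kc2 Pc2 k) (wf Hc1 Hc1 Pc1 k) (wf Hc2 Kc2 Pc2 k)"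
proof (induct k)
  case 0
  then show ?case by (simp add: Zc_0 bm_one)
next
  case (Suc k)
  then show ?case unfolding Zseq.simps using Zc_step[of k] by simp
qed

lemma Sigma_Lam: "Sigma_hn \<gamma> h n ** (blockmat (l1 Pc1) (l1 Pc2) (l2 Hc1 Pc1) (l2 Kc2 Pc2) :: ('d::finite) phmat) = matpow (Ah \<gamma> h) n"
proof -
  have "Zseq (Ah \<gamma> h) (Lh \<gamma> h) (blockmat (l1 Pc1) (l1 Pc2) (l2 Hc1 Pc1) (l2 Kc2 Pc2) :: ('d::finite) phmat) n n = 0" using Zseq_explicit[of n] by (simp add: Zc_n bm_zero)
  then show ?thesis unfolding Zseq_gen Sigma_hn_def by simp
qed

lemma A_inv: "invertible (Ah \<gamma> h :: ('d::finite) phmat)"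
proof -
  have "(Ah \<gamma> h :: 'd phmat) ** blockmat 1 (-h*t/r) 0 (1/r) = mat 1"
    using r_pos by (simp add: A_bm bm_mult bm_one)
  then show ?thesis using invertible_right_inverse by blast
qed

lemma Apow_inv: "invertible (matpow (Ah \<gamma> h :: ('d::finite) phmat) m)"
proof (induct m)
  case 0
  then show ?case by (auto simp: invertible_def)
next
  case (Suc m)
  then show ?case by (simp add: invertible_mult A_inv)
qed

lemma Sigma_inv: "invertible (Sigma_hn \<gamma> h n :: ('d::finite) phmat)"
proof -
  obtain C where C: "matpow (Ah \<gamma> h :: 'd phmat) n ** C = mat 1" using Apow_inv invertible_right_inverse by blast
  have "Sigma_hn \<gamma> h n ** ((blockmat (l1 Pc1) (l1 Pc2) (l2 Hc1 Pc1) (l2 Kc2 Pc2) :: ('d::finite) phmat) ** C) = mat 1" using C by (simp add: matrix_mul_assoc Sigma_Lam)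
  then show ?thesis using invertible_right_inverse by blast
qed

lemma Sinv_An: "matrix_inv (Sigma_hn \<gamma> h n) ** matpow (Ah \<gamma> h) n = (blockmat (l1 Pc1) (l1 Pc2) (l2 Hc1 Pc1) (l2 Kc2 Pc2) :: ('d::finite) phmat)"
proof -
  have "\<exists>A'. Sigma_hn \<gamma> h n ** A' = mat 1 \<and> A' ** Sigma_hn \<gamma> h n = (mat 1 :: 'd phmat)"
    using Sigma_inv unfolding invertible_def by blast
  then have "matrix_inv (Sigma_hn \<gamma> h n) ** Sigma_hn \<gamma> h n = (mat 1 :: 'd phmat)"
    unfolding matrix_inv_def by (rule someI2_ex) auto
  then show ?thesis unfolding Sigma_Lam[symmetric] by (simp add: matrix_mul_assoc)
qed

lemma traj_explicit: "k \<le> n \<Longrightarrow> traj \<gamma> h n dz k = blockmat (uf 1 Hc1 Hc1 Pc1 k) (uf 0 Hc2 Kc2 Pc2 k) (wf Hc1 Hc1 Pc1 k) (wf Hc2 Kc2 Pc2 k) *v (dz :: ('d::finite) phase)"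
  by (simp add: traj_Zseq[OF Sinv_An] Zseq_explicit)

lemma G_pos: "G > 0" using RR_pos hpos by (simp add: G_def)

lemma a_bound: assumes "k \<le> n" shows "0 \<le> uf 1 Hc1 Hc1 Pc1 k" "uf 1 Hc1 Hc1 Pc1 k \<le> 1"
proof -
  have rn: "\<And>i. i < n \<Longrightarrow> 0 \<le> rho i" using rho_pos by (simp add: less_imp_le)
  have s0: "0 \<le> (\<Sum>i<k. rho i)" using rn assms by (intro sum_nonneg) auto
  have s1: "(\<Sum>i<k. rho i) \<le> RR" unfolding RR_def using assms rn
    by (intro sum_mono2) auto
  have "(\<Sum>i<k. -G * rho i) = -G * (\<Sum>i<k. rho i)" by (simp add: sum_distrib_left)
  then have eq: "uf 1 Hc1 Hc1 Pc1 k = 1 - (\<Sum>i<k. rho i) / RR"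
    unfolding uf_def mf1 using hpos RR_pos by (simp add: G_def)
  show "0 \<le> uf 1 Hc1 Hc1 Pc1 k" unfolding eq using s1 RR_pos by simp
  show "uf 1 Hc1 Hc1 Pc1 k \<le> 1" unfolding eq using s0 RR_pos by simp
qed

lemma m0_bounds: assumes "i < n" shows "0 \<le> m0 i" "m0 i \<le> t * r^i"
proof -
  have d: "0 < 1 - r^n*r^n" using q_lt1 by simp
  have eq: "m0 i = t * (r^i - r^n * r^(n - Suc i)) / (1 - r^n*r^n)"
  proof -
    define D where "D = 1 - r^n*r^n"
    have "D \<noteq> 0" using d by (simp add: D_def)
    then have "t*(1/D*r^i + (- (r^n))/D * r^(n - Suc i)) + (1+r)*0 = t * (r^i - r^n * r^(n - Suc i)) / D"
      by (simp add: field_simps)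
    then show ?thesis unfolding m0_def mf_def H0_def K0_def D_def by simp
  qed
  have r01: "0 \<le> r" "r \<le> 1" using r_pos r_lt1 by auto
  have "r^n * r^(n - Suc i) = r^(n + (n - Suc i))" by (simp add: power_add)
  also have "\<dots> \<le> r^i" using assms r01 by (intro power_decreasing) auto
  finally have A: "r^n * r^(n - Suc i) \<le> r^i" .
  have "r^i * (r^n*r^n) = r^(i + (n+n))" by (simp add: power_add)
  also have "\<dots> \<le> r^(n + (n - Suc i))" using assms r01 by (intro power_decreasing) auto
  also have "\<dots> = r^n * r^(n - Suc i)" by (simp add: power_add)
  finally have B: "r^i * (r^n*r^n) \<le> r^n * r^(n - Suc i)" .
  show "0 \<le> m0 i" unfolding eq using A d t_pos by simp
  have "t * (r^i - r^n * r^(n - Suc i)) \<le> t * r^i * (1 - r^n*r^n)"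
    using B t_pos by (simp add: algebra_simps)
  then show "m0 i \<le> t * r^i" unfolding eq using d by (simp add: divide_le_eq)
qed

lemma kap_nonneg: "kap \<ge> 0"
  unfolding kap_def using RR_pos m0_bounds(1) by (intro divide_nonneg_pos sum_nonneg) auto

lemma b_bound: assumes "k \<le> n" shows "\<bar>uf 0 Hc2 Kc2 Pc2 k\<bar> \<le> h * t * (\<Sum>i<n. r^i)"
proof -
  have rn: "\<And>i. i < n \<Longrightarrow> 0 \<le> kap * rho i" using rho_pos kap_nonneg by (simp add: less_imp_le)
  have tr: "\<And>i. 0 \<le> t * r^i" using t_pos r_pos by simp
  have up: "(\<Sum>i<k. m0 i - kap * rho i) \<le> (\<Sum>i<n. t * r^i)"
  proof -
    have "(\<Sum>i<k. m0 i - kap * rho i) \<le> (\<Sum>i<k. t * r^i)"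
      using assms rn m0_bounds(2) by (intro sum_mono) (smt (verit) lessThan_iff order_less_le_trans)
    also have "\<dots> \<le> (\<Sum>i<n. t * r^i)" using assms tr by (intro sum_mono2) auto
    finally show ?thesis .
  qed
  have tot: "(\<Sum>i<n. m0 i - kap * rho i) = 0" using Zc_n(2) hpos unfolding uf_def mf2 by simp
  have split: "(\<Sum>i<n. m0 i - kap * rho i) = (\<Sum>i<k. m0 i - kap * rho i) + (\<Sum>i\<in>{k..<n}. m0 i - kap * rho i)"
    using assms by (simp add: lessThan_atLeast0 sum.atLeastLessThan_concat)
  have lo: "(\<Sum>i\<in>{k..<n}. m0 i - kap * rho i) \<le> (\<Sum>i<n. t * r^i)"
  proof -
    have "(\<Sum>i\<in>{k..<n}. m0 i - kap * rho i) \<le> (\<Sum>i\<in>{k..<n}. t * r^i)"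
      using rn m0_bounds(2) by (intro sum_mono) (smt (verit) atLeastLessThan_iff)
    also have "\<dots> \<le> (\<Sum>i<n. t * r^i)" using tr by (intro sum_mono2) auto
    finally show ?thesis .
  qed
  have "\<bar>\<Sum>i<k. m0 i - kap * rho i\<bar> \<le> (\<Sum>i<n. t * r^i)" using up lo split tot by linarith
  then have "h * \<bar>\<Sum>i<k. m0 i - kap * rho i\<bar> \<le> h * (\<Sum>i<n. t * r^i)" using hpos by (simp add: mult_left_mono)
  then show ?thesis unfolding uf_def mf2 using hpos by (simp add: abs_mult sum_distrib_left[symmetric] mult.assoc)
qed

lemma c_eq: "h * exp (-\<gamma>*h/2) / (1 - exp (-\<gamma>*h)) * (1 - exp (-\<gamma>*h*n)) = h * t * (\<Sum>i<n. r^i)"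
proof -
  have e: "exp (-(\<gamma>*h*real n)) = r^n" using exp_ghn by simp
  show ?thesis using r_lt1 by (simp add: t_def' exp_gh' e sum_gp_strict)
qed

lemma c_le: "h * t * (\<Sum>i<n. r^i) \<le> 2*h*n/(2 + \<gamma>*h*n)"
proof -
  have S: "(\<Sum>i<n. r^i) = (1 - r^n)/(1-r)" using r_lt1 by (simp add: sum_gp_strict)
  have b1: "\<gamma>*h*t \<le> 1 - r" using c_bound1[of "\<gamma>*h"] gpos hpos by (simp add: t_def' exp_gh')
  have T: "0 \<le> \<gamma>*h*n" using gpos hpos by simp
  have b2: "(1 - r^n) * (2 + \<gamma>*h*n) \<le> 2*(\<gamma>*h*n)" using c_bound2[OF T] exp_ghn by simp
  have q: "0 \<le> 1 - r^n" using q_lt by simp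
  have "h * t * (1 - r^n) * \<gamma> \<le> (1 - r) * (1 - r^n)"
    using mult_right_mono[OF b1 q] by (simp add: algebra_simps)
  then have "h * t * ((1 - r^n)/(1-r)) \<le> (1 - r^n)/\<gamma>"
    using r_lt1 gpos by (simp add: field_simps)
  also have "\<dots> \<le> 2*h*n/(2 + \<gamma>*h*n)"
    using b2 gpos T by (simp add: field_simps)
  finally show ?thesis unfolding S .
qed

lemma c_nonneg: "0 \<le> h * t * (\<Sum>i<n. r^i)"
  using hpos t_pos r_pos by (simp add: sum_nonneg)

lemma main_loc:
  fixes z z' :: "('d::finite) phase"
  assumes "k \<le> n"
  shows "norm (pos (traj \<gamma> h n (z' - z) k))
           \<le> norm (pos (z' - z)) + h * exp (-\<gamma>*h/2) / (1 - exp (-\<gamma>*h))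
                 * (1 - exp (-\<gamma>*h*n)) * norm (vel (z' - z))
       \<and> norm (pos (z' - z)) + h * exp (-\<gamma>*h/2) / (1 - exp (-\<gamma>*h))
                 * (1 - exp (-\<gamma>*h*n)) * norm (vel (z' - z))
           \<le> 2 * (1 + h*n / (2 + \<gamma>*h*n)) * norm (z' - z)"
proof -
  define dz where "dz = z' - z"
  define c where "c = h * t * (\<Sum>i<n. r^i)"
  define a where "a = uf 1 Hc1 Hc1 Pc1 k"
  define b where "b = uf 0 Hc2 Kc2 Pc2 k"
  have p: "pos (traj \<gamma> h n dz k) = a *\<^sub>R pos dz + b *\<^sub>R vel dz"
    by (simp add: traj_explicit[OF assms] bm_pos a_def b_def)
  have "norm (pos (traj \<gamma> h n dz k)) \<le> \<bar>a\<bar> * norm (pos dz) + \<bar>b\<bar> * norm (vel dz)"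
    unfolding p by (rule order_trans[OF norm_triangle_ineq]) simp
  also have "\<dots> \<le> 1 * norm (pos dz) + c * norm (vel dz)"
    using a_bound[OF assms] b_bound[OF assms] unfolding a_def[symmetric] b_def[symmetric] c_def[symmetric]
    by (intro add_mono mult_right_mono) auto
  finally have I1: "norm (pos (traj \<gamma> h n dz k)) \<le> norm (pos dz) + c * norm (vel dz)" by simp
  have "norm (pos dz) + c * norm (vel dz) \<le> norm dz + c * norm dz"
    using norm_pos_le[of dz] norm_vel_le[of dz] c_nonneg unfolding c_def[symmetric]
    by (intro add_mono mult_left_mono) auto
  also have "\<dots> = (1 + c) * norm dz" by (simp add: algebra_simps)
  also have "\<dots> \<le> (1 + 2*h*n/(2 + \<gamma>*h*n)) * norm dz"
    using c_le unfolding c_def[symmetric] by (intro mult_right_mono) auto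
  also have "\<dots> \<le> 2 * (1 + h*n / (2 + \<gamma>*h*n)) * norm dz"
  proof -
    have "0 \<le> h*n / (2 + \<gamma>*h*n)" using gpos hpos by simp
    then show ?thesis by (intro mult_right_mono) (auto simp: field_simps)
  qed
  finally have I2: "norm (pos dz) + c * norm (vel dz) \<le> 2 * (1 + h*n / (2 + \<gamma>*h*n)) * norm dz" .
  show ?thesis using I1 I2 unfolding c_eq dz_def[symmetric] c_def by simp
qed

end

theorem mainTheorem9:
  fixes \<gamma> h :: real and n k :: nat and z z' :: "('d::finite) phase"
  assumes "\<gamma> > 0" and "h > 0" and "n \<ge> 1" and "k \<le> n"
  shows "norm (pos (traj \<gamma> h n (z' - z) k))
           \<le> norm (pos (z' - z)) + h * exp (-\<gamma>*h/2) / (1 - exp (-\<gamma>*h))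
                 * (1 - exp (-\<gamma>*h*n)) * norm (vel (z' - z))
       \<and> norm (pos (z' - z)) + h * exp (-\<gamma>*h/2) / (1 - exp (-\<gamma>*h))
                 * (1 - exp (-\<gamma>*h*n)) * norm (vel (z' - z))
           \<le> 2 * (1 + h*n / (2 + \<gamma>*h*n)) * norm (z' - z)"
proof -
  interpret tsetup \<gamma> h n using assms by unfold_locales auto
  show ?thesis by (rule main_loc[OF assms(4)])
qed

end
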